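(* Let $G$ be a simple graph on $n$ vertices with $cM_2(G)\ge cM_2(H)$ for every simple graph $H$ on $n$ vertices, and let $F$, $Y$ be as defined in the context. If $u,v\in Y$ and $uv\in E(G)$, then $uv$ is not an undirected edge of $F$ (equivalently, $d_G(u)\ne d_G(v)$).
   Context: All graphs are finite and simple; $d_G(u)$ is the degree of $u$ and $cM_2(G)=\sum_{uv\in E(G)}|d_G(u)^2-d_G(v)^2|$. The canonical mixed graph $F$ of $G$ has vertex set $V(G)$; for each edge $uv\in E(G)$: if $d_G(u)>d_G(v)$ then $F$ contains the arc $\overrightarrow{uv}$, and if $d_G(u)=d_G(v)$ then $F$ contains the undirected edge $uv$. $d^+_F(u)$ (resp. $d^-_F(u)$) is the number of arcs of $F$ with tail (resp. head) $u$. $Y=\{u\in V(G): d^+_F(u)< d^-_F(u)\}$. *)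

theory Defs
  imports Main
begin

definition simple_graph :: "'a set \<Rightarrow> 'a set set \<Rightarrow> bool" where
  "simple_graph V E \<longleftrightarrow> finite V \<and> (\<forall>e\<in>E. e \<subseteq> V \<and> card e = 2)"

definition deg :: "'a set set \<Rightarrow> 'a \<Rightarrow> nat" where
  "deg E u = card {e \<in> E. u \<in> e}"

definition cM2 :: "'a set set \<Rightarrow> nat" where
  "cM2 E = (\<Sum>e\<in>E. THE k. \<exists>u v. e = {u, v} \<and>
       k = nat \<bar>int (deg E u ^ 2) - int (deg E v ^ 2)\<bar>)"

definition F_arcs :: "'a set set \<Rightarrow> ('a \<times> 'a) set" where
  "F_arcs E = {(u, v). {u, v} \<in> E \<and> deg E u > deg E v}"

definition F_undir :: "'a set set \<Rightarrow> 'a set set" where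
  "F_undir E = {e \<in> E. \<exists>u v. e = {u, v} \<and> deg E u = deg E v}"

definition out_deg :: "'a set set \<Rightarrow> 'a \<Rightarrow> nat" where
  "out_deg E u = card {v. (u, v) \<in> F_arcs E}"

definition in_deg :: "'a set set \<Rightarrow> 'a \<Rightarrow> nat" where
  "in_deg E u = card {v. (v, u) \<in> F_arcs E}"

definition Yset :: "'a set \<Rightarrow> 'a set set \<Rightarrow> 'a set" where
  "Yset V E = {u \<in> V. out_deg E u < in_deg E u}"

end

theory Submission
  imports Defs
begin

definition val :: "'a set set \<Rightarrow> 'a set \<Rightarrow> nat" where
 "val E e = (THE k. \<exists>u v. e = {u, v} \<and> k = nat \<bar>int (deg E u ^ 2) - int (deg E v ^ 2)\<bar>)"

lemma cM2_val: "cM2 E = sum (val E) E" unfolding cM2_def val_def by simp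

lemma val_pair: "val E {x,y} = nat \<bar>int (deg E x ^ 2) - int (deg E y ^ 2)\<bar>"
  unfolding val_def
proof (rule the_equality)
  show "\<exists>a b. {x,y} = {a,b} \<and> nat \<bar>int (deg E x ^ 2) - int (deg E y ^ 2)\<bar> = nat \<bar>int (deg E a ^ 2) - int (deg E b ^ 2)\<bar>" by blast
next
  fix k assume "\<exists>a b. {x, y} = {a, b} \<and> k = nat \<bar>int (deg E a ^ 2) - int (deg E b ^ 2)\<bar>"
  then obtain a b where "{x,y} = {a,b}" "k = nat \<bar>int (deg E a ^ 2) - int (deg E b ^ 2)\<bar>" by blast
  then show "k = nat \<bar>int (deg E x ^ 2) - int (deg E y ^ 2)\<bar>" by (auto simp: doubleton_eq_iff abs_minus_commute)
qed

lemma arith_step: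
  fixes a d :: nat assumes "d \<ge> 1"
  shows "int (nat \<bar>int (a^2) - int ((d-1)^2)\<bar>) - int (nat \<bar>int (a^2) - int (d^2)\<bar>)
     \<ge> (2*int d - 1) * (of_bool (a > d) - of_bool (a < d))"
proof -
  obtain k where k: "d = Suc k" using assms by (cases d) auto
  show ?thesis
  proof (cases "a \<ge> d")
    case True
    have "a^2 \<ge> d^2" using True by (simp add: power_mono)
    moreover have "d^2 \<ge> k^2" using k by (simp add: power_mono)
    ultimately have h1: "int (a^2) \<ge> int (d^2)" "int (d^2) \<ge> int (k^2)" by simp_all
    have e: "int (d^2) = int (k^2) + 2 * int k + 1" using k by (simp add: power2_eq_square algebra_simps)
    have "int (nat \<bar>int (a^2) - int ((d-1)^2)\<bar>) - int (nat \<bar>int (a^2) - int (d^2)\<bar>) = 2*int d - 1"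
    proof -
      have gen: "\<And>A D K::int. A \<ge> D \<Longrightarrow> D \<ge> K \<Longrightarrow> D = K + 2*int k + 1 \<Longrightarrow> int(nat\<bar>A-K\<bar>) - int(nat\<bar>A-D\<bar>) = 2*int k+1" by arith
      have "d - 1 = k" using k by simp
      then show ?thesis using gen[OF h1 e] k by simp
    qed
    then show ?thesis using True assms by auto
  next
    case False
    then have "a \<le> k" using k by simp
    then have "a^2 \<le> k^2" by (simp add: power_mono)
    moreover have "d^2 \<ge> k^2" using k by (simp add: power_mono)
    ultimately have h1: "int (a^2) \<le> int (k^2)" "int (d^2) \<ge> int (k^2)" by simp_all
    have e: "int (d^2) = int (k^2) + 2 * int k + 1" using k by (simp add: power2_eq_square algebra_simps)
    have "int (nat \<bar>int (a^2) - int ((d-1)^2)\<bar>) - int (nat \<bar>int (a^2) - int (d^2)\<bar>) = -(2*int d - 1)"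
    proof -
      have gen: "\<And>A D K::int. A \<le> K \<Longrightarrow> D \<ge> K \<Longrightarrow> D = K + 2*int k + 1 \<Longrightarrow> int(nat\<bar>A-K\<bar>) - int(nat\<bar>A-D\<bar>) = -(2*int k+1)" by arith
      have "d - 1 = k" using k by simp
      then show ?thesis using gen[OF h1 e] k by simp
    qed
    then show ?thesis using False assms by auto
  qed
qed


lemma finE: "simple_graph V E \<Longrightarrow> finite E"
  unfolding simple_graph_def by (meson PowI finite_Pow_iff finite_subset subsetI)

lemma edge_pair: "simple_graph V E \<Longrightarrow> e \<in> E \<Longrightarrow> \<exists>a b. e = {a,b} \<and> a \<noteq> b"
  unfolding simple_graph_def by (metis card_2_iff)

lemma key:
  assumes sg: "simple_graph V E" and xy: "{x,y} \<in> E" and dd: "deg E x = deg E y"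
    and Y: "out_deg E x < in_deg E x"
  shows "(\<Sum>e\<in>{e\<in>E - {{x,y}}. x \<in> e}. int (val (E - {{x,y}}) e) - int (val E e)) \<ge> 1"
proof -
  define E' where "E' = E - {{x,y}}"
  have fE: "finite E" using finE[OF sg] .
  have xny: "x \<noteq> y" using edge_pair[OF sg xy] by (auto simp: doubleton_eq_iff)
  have sx: "{e\<in>E'. x\<in>e} = {e\<in>E. x\<in>e} - {{x,y}}" unfolding E'_def by auto
  have degx: "deg E' x = deg E x - 1"
    unfolding deg_def sx using fE xy by (simp add: card_Diff_singleton)
  have degw: "deg E' w = deg E w" if "w \<noteq> x" "w \<noteq> y" for w
  proof -
    have "{e\<in>E'. w\<in>e} = {e\<in>E. w\<in>e}" unfolding E'_def using that by auto
    then show ?thesis unfolding deg_def by simp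
  qed
  have d1: "deg E x \<ge> 1"
  proof -
    have "{x,y} \<in> {e\<in>E. x\<in>e}" using xy by simp
    moreover have "finite {e\<in>E. x\<in>e}" using fE by simp
    ultimately show ?thesis unfolding deg_def
      by (metis One_nat_def Suc_leI card_gt_0_iff empty_iff)
  qed
  define N where "N = {w. {x,w} \<in> E \<and> w \<noteq> y}"
  have NV: "N \<subseteq> V" using sg unfolding N_def simple_graph_def by auto
  have fN: "finite N" using NV sg unfolding simple_graph_def by (meson finite_subset)
  have Nx: "w \<noteq> x" if "w \<in> N" for w
  proof
    assume "w = x"
    then have "{x} \<in> E" using that unfolding N_def by simp
    then show False using sg unfolding simple_graph_def by force
  qed
  have img: "{e\<in>E'. x\<in>e} = (\<lambda>w. {x,w}) ` N"
  proof
    show "{e\<in>E'. x\<in>e} \<subseteq> (\<lambda>w. {x,w}) ` N"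
    proof
      fix e assume e: "e \<in> {e\<in>E'. x\<in>e}"
      then have eE: "e \<in> E" "e \<noteq> {x,y}" "x \<in> e" unfolding E'_def by auto
      obtain a b where ab: "e = {a,b}" "a \<noteq> b" using edge_pair[OF sg eE(1)] by blast
      then obtain w where w: "e = {x,w}" using eE(3) by auto
      then have "w \<noteq> y" using eE(2) by auto
      then have "w \<in> N" unfolding N_def using w eE(1) by auto
      then show "e \<in> (\<lambda>w. {x,w}) ` N" using w by auto
    qed
    show "(\<lambda>w. {x,w}) ` N \<subseteq> {e\<in>E'. x\<in>e}"
      unfolding N_def E'_def by (auto simp: doubleton_eq_iff)
  qed
  have inj: "inj_on (\<lambda>w. {x,w}) N"
    by (rule inj_onI) (auto simp: doubleton_eq_iff)
  define d where "d = deg E x"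
  define c :: int where "c = 2 * int d - 1"
  have c1: "c \<ge> 1" using d1 unfolding c_def d_def by simp
  have tm: "int (val E' {x,w}) - int (val E {x,w}) \<ge> c * (of_bool (deg E w > d) - of_bool (deg E w < d))"
    if "w \<in> N" for w
  proof -
    have "w \<noteq> y" using that unfolding N_def by simp
    then have "deg E' w = deg E w" using degw Nx[OF that] by simp
    then show ?thesis unfolding val_pair degx c_def d_def
      using arith_step[OF d1, of "deg E w"] by (simp add: abs_minus_commute)
  qed
  have "(\<Sum>e\<in>{e\<in>E'. x\<in>e}. int (val E' e) - int (val E e))
      = (\<Sum>w\<in>N. int (val E' {x,w}) - int (val E {x,w}))"
    unfolding img by (simp add: sum.reindex[OF inj])
  also have "\<dots> \<ge> (\<Sum>w\<in>N. c * (of_bool (deg E w > d) - of_bool (deg E w < d)))"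
    by (rule sum_mono) (use tm in auto)
  moreover have "(\<Sum>w\<in>N. c * (of_bool (deg E w > d) - of_bool (deg E w < d)))
      = c * (int (card (N \<inter> {w. deg E w > d})) - int (card (N \<inter> {w. deg E w < d})))"
    using fN by (simp add: sum_distrib_left[symmetric] sum_subtractf)
  moreover have "N \<inter> {w. deg E w > d} = {w. (w,x) \<in> F_arcs E}"
    unfolding N_def F_arcs_def d_def using dd by (auto simp: insert_commute)
  moreover have "N \<inter> {w. deg E w < d} = {w. (x,w) \<in> F_arcs E}"
    unfolding N_def F_arcs_def d_def using dd by auto
  ultimately have "(\<Sum>e\<in>{e\<in>E'. x\<in>e}. int (val E' e) - int (val E e))
      \<ge> c * (int (in_deg E x) - int (out_deg E x))"
    unfolding in_deg_def out_deg_def by simp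
  moreover have "c * (int (in_deg E x) - int (out_deg E x)) \<ge> 1"
  proof -
    have t: "int (in_deg E x) - int (out_deg E x) \<ge> 1" using Y by simp
    have "c * 1 \<le> c * (int (in_deg E x) - int (out_deg E x))"
      using mult_left_mono[OF t, of c] c1 by linarith
    then show ?thesis using c1 by linarith
  qed
  ultimately show ?thesis unfolding E'_def by linarith
qed


theorem claim2:
  fixes V :: "'a set" and E :: "'a set set"
  assumes "simple_graph V E"
    and "\<And>E'. simple_graph V E' \<Longrightarrow> cM2 E' \<le> cM2 E"
    and "u \<in> Yset V E" and "v \<in> Yset V E" and "{u, v} \<in> E"
  shows "{u, v} \<notin> F_undir E"
proof
  assume U: "{u, v} \<in> F_undir E"
  note sg = assms(1) and uv = assms(5)
  have dd: "deg E u = deg E v" using U unfolding F_undir_def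
    by (auto simp: doubleton_eq_iff)
  define E' where "E' = E - {{u,v}}"
  have sg': "simple_graph V E'" using sg unfolding simple_graph_def E'_def by auto
  have fE: "finite E" using finE[OF sg] .
  have fE': "finite E'" unfolding E'_def using fE by simp
  define D where "D e = int (val E' e) - int (val E e)" for e
  have degw: "deg E' w = deg E w" if "w \<noteq> u" "w \<noteq> v" for w
  proof -
    have "{e\<in>E'. w\<in>e} = {e\<in>E. w\<in>e}" unfolding E'_def using that by auto
    then show ?thesis unfolding deg_def by simp
  qed
  have split: "D e = (if u \<in> e then D e else 0) + (if v \<in> e then D e else 0)" if "e \<in> E'" for e
  proof -
    have eE: "e \<in> E" "e \<noteq> {u,v}" using that unfolding E'_def by auto
    obtain a b where ab: "e = {a,b}" "a \<noteq> b" using edge_pair[OF sg eE(1)] by blast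
    have notboth: "\<not> (u \<in> e \<and> v \<in> e)"
    proof
      assume "u \<in> e \<and> v \<in> e"
      moreover have "u \<noteq> v" using edge_pair[OF sg uv] by (auto simp: doubleton_eq_iff)
      ultimately have "e = {u,v}" using ab by auto
      then show False using eE(2) by simp
    qed
    show ?thesis
    proof (cases "u \<in> e \<or> v \<in> e")
      case True then show ?thesis using notboth by auto
    next
      case False
      then have "a \<noteq> u" "a \<noteq> v" "b \<noteq> u" "b \<noteq> v" using ab by auto
      then have "D e = 0" unfolding D_def ab(1) val_pair using degw by simp
      then show ?thesis by simp
    qed
  qed
  have "(\<Sum>e\<in>E'. D e) = (\<Sum>e\<in>E'. (if u \<in> e then D e else 0)) + (\<Sum>e\<in>E'. (if v \<in> e then D e else 0))"
    using split by (simp add: sum.distrib[symmetric] cong: sum.cong)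
  also have "\<dots> = (\<Sum>e\<in>{e\<in>E'. u \<in> e}. D e) + (\<Sum>e\<in>{e\<in>E'. v \<in> e}. D e)"
    using fE' by (simp add: sum.inter_filter)
  finally have sumD: "(\<Sum>e\<in>E'. D e) = (\<Sum>e\<in>{e\<in>E'. u \<in> e}. D e) + (\<Sum>e\<in>{e\<in>E'. v \<in> e}. D e)" .
  have Yu: "out_deg E u < in_deg E u" using assms(3) unfolding Yset_def by simp
  have Yv: "out_deg E v < in_deg E v" using assms(4) unfolding Yset_def by simp
  have k1: "(\<Sum>e\<in>{e\<in>E'. u \<in> e}. D e) \<ge> 1"
    using key[OF sg uv dd Yu] unfolding D_def E'_def .
  have vu: "{v,u} \<in> E" using uv by (simp add: insert_commute)
  have k2: "(\<Sum>e\<in>{e\<in>E'. v \<in> e}. D e) \<ge> 1"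
    using key[OF sg vu dd[symmetric] Yv] unfolding D_def E'_def by (simp add: insert_commute)
  have "cM2 E = (\<Sum>e\<in>E'. val E e) + val E {u,v}"
    unfolding cM2_val E'_def using fE uv by (simp add: sum.remove)
  moreover have "val E {u,v} = 0" unfolding val_pair using dd by simp
  ultimately have "int (cM2 E) = (\<Sum>e\<in>E'. int (val E e))" by simp
  moreover have "int (cM2 E') = (\<Sum>e\<in>E'. int (val E' e))" unfolding cM2_val by simp
  ultimately have "int (cM2 E') - int (cM2 E) = (\<Sum>e\<in>E'. D e)"
    unfolding D_def by (simp add: sum_subtractf)
  then have "int (cM2 E') \<ge> int (cM2 E) + 2" using sumD k1 k2 by linarith
  moreover have "cM2 E' \<le> cM2 E" using assms(2)[OF sg'] .
  ultimately show False by linarith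
qed

end
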